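(* Let $f$ be a transcendental meromorphic function projectable via $\exp_1$, and $g$ its exponential projection. Then $\mathcal{E}(g)\cap\mathbb{C}^*=\exp_1(f^{-1}(\infty))$. If $f$ is not entire, then $f$ has infinitely many poles and $\mathcal{E}(g)\cap\mathbb{C}^*\neq\emptyset$.
   Context: $\exp_1(z)=e^{2\pi iz}$; $f$ is projectable via $\exp_1$ if there is $g$ (its exponential projection) with $g\circ\exp_1=\exp_1\circ f$ wherever defined. $\mathcal{E}(g)\subset\widehat{\mathbb{C}}$ denotes the set of essential singularities of $g$, i.e. $g$ is meromorphic on $\widehat{\mathbb{C}}\setminus\mathcal{E}(g)$ and on no larger set. *)

theory Defs
  imports "HOL-Complex_Analysis.Complex_Analysis" "HOL-Computational_Algebra.Polynomial"
begin

definition exp1 :: "complex \<Rightarrow> complex" where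
  "exp1 z = exp (2 * of_real pi * \<i> * z)"

definition rational_function :: "(complex \<Rightarrow> complex) \<Rightarrow> bool" where
  "rational_function f \<longleftrightarrow>
     (\<exists>p q :: complex poly. q \<noteq> 0 \<and> (\<forall>z. poly q z \<noteq> 0 \<longrightarrow> f z = poly p z / poly q z))"

definition transcendental_meromorphic :: "(complex \<Rightarrow> complex) \<Rightarrow> bool" where
  "transcendental_meromorphic f \<longleftrightarrow> f nicely_meromorphic_on UNIV \<and> \<not> rational_function f"

definition exp_projection :: "(complex \<Rightarrow> complex) \<Rightarrow> (complex \<Rightarrow> complex) \<Rightarrow> bool" where
  "exp_projection f g \<longleftrightarrow> (\<forall>z. \<not> is_pole f z \<longrightarrow> g (exp1 z) = exp1 (f z))"

text \<open>Finite essential singularities of g (the part of E(g) in the complex plane):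
  points in no neighbourhood of which g is meromorphic.\<close>
definition ess_sings_finite :: "(complex \<Rightarrow> complex) \<Rightarrow> complex set" where
  "ess_sings_finite g = {w. \<not> g meromorphic_on {w}}"

end

theory Submission
  imports Defs
begin

lemma exp1_plus_nat: "exp1 (t + of_nat n) = exp1 t"
proof -
  have "exp1 (t + of_nat n) = exp (2 * of_real pi * \<i> * t + \<i> * (of_nat n * (of_real pi * 2)))"
    unfolding exp1_def by (simp add: algebra_simps)
  also have "\<dots> = exp (2 * of_real pi * \<i> * t) * exp (\<i> * (of_nat n * (of_real pi * 2)))"
    by (rule exp_add)
  also have "\<dots> = exp1 t" by (simp add: exp1_def)
  finally show ?thesis .
qed

lemma exp1_plus_1: "exp1 (t + 1) = exp1 t"
  using exp1_plus_nat[of t 1] by simp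

lemma exp1_nonzero: "exp1 z \<noteq> 0" by (simp add: exp1_def)

lemma exp1_inj_near:
  assumes "exp1 z = exp1 z0" "dist z z0 < 1"
  shows "z = z0"
proof -
  obtain n :: int where n: "2 * of_real pi * \<i> * z = 2 * of_real pi * \<i> * z0 + (of_int (2 * n) * pi) * \<i>"
    using assms(1) unfolding exp1_def exp_eq by blast
  have "2 * of_real pi * \<i> * z = 2 * of_real pi * \<i> * (z0 + of_int n)"
    using n by (simp add: algebra_simps)
  hence "z = z0 + of_int n" using pi_gt_zero by (simp del: mult_cancel_left1)
  hence "dist z z0 = \<bar>of_int n\<bar>" by (simp add: dist_norm)
  with assms(2) have "n = 0" by linarith
  thus ?thesis using \<open>z = z0 + of_int n\<close> by simp
qed

lemma exp1_Ln: "w \<noteq> 0 \<Longrightarrow> exp1 (Ln w / (2 * of_real pi * \<i>)) = w"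
  unfolding exp1_def by simp

lemma core:
  assumes nm: "f nicely_meromorphic_on UNIV" and pole: "is_pole f z0" and "\<epsilon> > 0"
  shows "\<exists>z. z \<noteq> z0 \<and> dist z z0 < \<epsilon> \<and> \<not> is_pole f z \<and> exp1 (f z) = exp1 t"
proof -
  have mer: "f meromorphic_on {z0}"
    using nm unfolding nicely_meromorphic_on_def using meromorphic_on_subset by blast
  obtain r where r: "r > 0" "f analytic_on ball z0 r - {z0}"
    using meromorphic_on_isolated_singularity[OF mer] unfolding isolated_singularity_at_def by blast
  have "filterlim (\<lambda>z. norm (f z)) at_top (at z0)"
    using pole unfolding is_pole_def by (rule filterlim_at_infinity_imp_norm_at_top)
  hence "eventually (\<lambda>z. 2 \<le> norm (f z)) (at z0)"
    unfolding filterlim_at_top by blast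
  then obtain d where d: "d > 0" "\<And>z. z \<noteq> z0 \<Longrightarrow> dist z z0 < d \<Longrightarrow> 2 \<le> norm (f z)"
    unfolding eventually_at by blast
  define s where "s = min \<epsilon> (min r d)"
  have s: "s > 0" "s \<le> \<epsilon>" "s \<le> r" "s \<le> d" using r d \<open>\<epsilon> > 0\<close> by (auto simp: s_def)
  have ana: "f analytic_on ball z0 s - {z0}"
    by (rule analytic_on_subset[OF r(2)]) (use s in auto)
  hence hol: "f holomorphic_on ball z0 s - {z0}"
    by (rule analytic_imp_holomorphic)
  have nz: "\<forall>x\<in>ball z0 s - {z0}. f x \<noteq> 0"
  proof
    fix x assume "x \<in> ball z0 s - {z0}"
    hence "2 \<le> norm (f x)" using d(2)[of x] s by (auto simp: dist_commute)
    thus "f x \<noteq> 0" by auto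
  qed
  define h where "h = (\<lambda>x. if x = z0 then 0 else inverse (f x))"
  have hh: "h holomorphic_on ball z0 s"
    unfolding h_def by (rule is_pole_inverse_holomorphic[OF open_ball hol pole nz])
  have nc: "\<not> h constant_on ball z0 s"
  proof
    assume "h constant_on ball z0 s"
    then obtain c where c: "\<And>z. z \<in> ball z0 s \<Longrightarrow> h z = c" unfolding constant_on_def by blast
    have "h z0 = 0" by (simp add: h_def)
    moreover have "z0 \<in> ball z0 s" using s by simp
    moreover have "z0 + of_real (s/2) \<in> ball z0 s" using s by (simp add: dist_norm)
    moreover have "z0 + of_real (s/2) \<noteq> z0" using s by simp
    moreover have "f (z0 + of_real (s/2)) \<noteq> 0" using nz \<open>z0 + of_real (s/2) \<in> ball z0 s\<close> \<open>z0 + of_real (s/2) \<noteq> z0\<close> by blast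
    ultimately show False using c[of z0] c[of "z0 + of_real (s/2)"] by (simp add: h_def)
  qed
  have "open (h ` ball z0 s)"
    by (rule open_mapping_thm[OF hh open_ball connected_ball open_ball order_refl nc])
  moreover have "0 \<in> h ` ball z0 s"
    using s by (intro image_eqI[of _ _ z0]) (auto simp: h_def)
  ultimately obtain e where e: "e > 0" "ball 0 e \<subseteq> h ` ball z0 s"
    using open_contains_ball by blast
  obtain n :: nat where n: "real n > norm t + 1 / e"
    using reals_Archimedean2 by blast
  define a where "a = t + of_nat n"
  have "norm a \<ge> real n - norm t"
    unfolding a_def using norm_diff_ineq[of "of_nat n :: complex" t] by (simp add: add.commute)
  hence na: "norm a > 1 / e" using n by linarith
  hence "a \<noteq> 0" using e by (auto simp: divide_simps split: if_splits)
  have "norm (inverse a) < e"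
  proof -
    have "norm a > 0" using \<open>a \<noteq> 0\<close> by simp
    have "1 / norm a < e" using na e \<open>norm a > 0\<close> by (simp add: field_simps)
    thus ?thesis by (simp add: norm_inverse divide_inverse)
  qed
  hence "inverse a \<in> h ` ball z0 s" using e by (auto simp: dist_norm)
  then obtain z where z: "z \<in> ball z0 s" "h z = inverse a" by (metis imageE)
  have "z \<noteq> z0" using z \<open>a \<noteq> 0\<close> by (auto simp: h_def)
  hence "inverse (f z) = inverse a" using z by (simp add: h_def)
  hence fz: "f z = a" by simp
  have "f analytic_on {z}"
    by (rule analytic_on_subset[OF ana]) (use z \<open>z \<noteq> z0\<close> in auto)
  hence "\<not> is_pole f z" by (rule analytic_at_imp_no_pole)
  moreover have "dist z z0 < \<epsilon>" using z s by (simp add: dist_commute)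
  moreover have "exp1 (f z) = exp1 t" using fz by (simp add: a_def exp1_plus_nat)
  ultimately show ?thesis using \<open>z \<noteq> z0\<close> by blast
qed

lemma exp1_half: "exp1 (1/2) = -1"
  unfolding exp1_def by (simp add: exp_pi_i')

lemma pole_ess:
  assumes nm: "f nicely_meromorphic_on UNIV" and pole: "is_pole f z0"
    and pr: "exp_projection f g"
  shows "\<not> g meromorphic_on {exp1 z0}"
proof
  define w where "w = exp1 z0"
  assume "g meromorphic_on {exp1 z0}"
  hence ne: "not_essential g w" by (simp add: meromorphic_at_iff w_def)
  obtain Q where Q: "eventually (\<lambda>u. Q (g u)) (at w)" "\<not> (Q 1 \<and> Q (-1))"
  proof -
    from ne obtain c where "(g \<longlongrightarrow> c) (at w) \<or> is_pole g w" unfolding not_essential_def by blast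
    thus thesis
    proof
      assume "(g \<longlongrightarrow> c) (at w)"
      hence "eventually (\<lambda>u. dist (g u) c < 1) (at w)" by (rule tendstoD) simp
      moreover have "\<not> (dist 1 c < 1 \<and> dist (-1) c < (1::real))"
      proof
        assume "dist 1 c < 1 \<and> dist (-1) c < (1::real)"
        moreover have "dist (1::complex) (-1) \<le> dist 1 c + dist (-1) c" by (rule dist_triangle2)
        moreover have "dist (1::complex) (-1) = 2" by (simp add: dist_norm)
        ultimately show False by linarith
      qed
      ultimately show thesis using that[of "\<lambda>v. dist v c < 1"] by blast
    next
      assume "is_pole g w"
      hence "filterlim (\<lambda>z. norm (g z)) at_top (at w)"
        unfolding is_pole_def by (rule filterlim_at_infinity_imp_norm_at_top)
      hence "eventually (\<lambda>z. 2 \<le> norm (g z)) (at w)"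
        unfolding filterlim_at_top by blast
      thus thesis using that[of "\<lambda>v. 2 \<le> norm v"] by simp
    qed
  qed
  obtain \<delta> where \<delta>: "\<delta> > 0" "\<And>u. u \<noteq> w \<Longrightarrow> dist u w < \<delta> \<Longrightarrow> Q (g u)"
    using Q(1) unfolding eventually_at by blast
  have "isCont exp1 z0" unfolding exp1_def by (intro continuous_intros)
  then obtain \<epsilon> where \<epsilon>: "\<epsilon> > 0" "\<And>z. dist z z0 < \<epsilon> \<Longrightarrow> dist (exp1 z) (exp1 z0) < \<delta>"
    unfolding continuous_at_eps_delta using \<delta>(1) by blast
  have claim: "Q (exp1 t)" for t
  proof -
    obtain z where z: "z \<noteq> z0" "dist z z0 < min \<epsilon> 1" "\<not> is_pole f z" "exp1 (f z) = exp1 t"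
      using core[OF nm pole, of "min \<epsilon> 1" t] \<epsilon>(1) by auto
    have "exp1 z \<noteq> w" using exp1_inj_near[of z z0] z unfolding w_def by auto
    moreover have "dist (exp1 z) w < \<delta>" using \<epsilon>(2)[of z] z unfolding w_def by auto
    ultimately have "Q (g (exp1 z))" using \<delta>(2) by blast
    moreover have "g (exp1 z) = exp1 (f z)" using pr z(3) unfolding exp_projection_def by blast
    ultimately show ?thesis using z(4) by simp
  qed
  have "exp1 0 = 1" by (simp add: exp1_def)
  thus False using claim[of 0] claim[of "1/2"] exp1_half Q(2) by simp
qed

lemma nonpole_mero:
  assumes nm: "f nicely_meromorphic_on UNIV" and np: "\<not> is_pole f z0"
    and pr: "exp_projection f g"
  shows "g meromorphic_on {exp1 z0}"
proof -
  define w where "w = exp1 z0"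
  have w0: "w \<noteq> 0" unfolding w_def by (rule exp1_nonzero)
  have "f analytic_on {z0}" using nicely_meromorphic_on_imp_analytic_at[OF nm _ np] by simp
  then obtain r where r: "r > 0" "f holomorphic_on ball z0 r" unfolding analytic_on_def by blast
  define L where "L = (\<lambda>u. z0 + Ln (u / w) / (2 * of_real pi * \<i>))"
  have Lw: "L w = z0" using w0 by (simp add: L_def)
  have Lhol: "L holomorphic_on ball w (norm w)"
    unfolding L_def
  proof (intro holomorphic_intros)
    fix u assume u: "u \<in> ball w (norm w)"
    have "norm (u / w - 1) = norm (u - w) / norm w" using w0
      by (simp add: norm_divide[symmetric] diff_divide_distrib)
    also have "\<dots> < 1" using u w0 by (simp add: dist_norm norm_minus_commute)
    finally have "norm (u / w - 1) < 1" .
    hence "Re (u / w) > 0"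
      using abs_Re_le_cmod[of "u / w - 1"] by auto
    thus "u / w \<notin> \<real>\<^sub>\<le>\<^sub>0" by (auto simp: complex_nonpos_Reals_iff)
  qed (use w0 in simp_all)
  have "isCont L w"
    using Lhol w0 by (intro holomorphic_on_imp_continuous_on[THEN continuous_on_interior]) auto
  then obtain \<rho> where \<rho>: "\<rho> > 0" "\<And>u. dist u w < \<rho> \<Longrightarrow> dist (L u) z0 < r"
    unfolding continuous_at_eps_delta Lw using r(1) by blast
  define \<sigma> where "\<sigma> = min \<rho> (norm w)"
  have \<sigma>: "\<sigma> > 0" "ball w \<sigma> \<subseteq> ball w (norm w)" using \<rho> w0 by (auto simp: \<sigma>_def)
  have Lin: "L u \<in> ball z0 r" if "u \<in> ball w \<sigma>" for u
    using \<rho>(2)[of u] that by (auto simp: \<sigma>_def dist_commute)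
  have eL: "exp1 (L u) = u" if "u \<in> ball w \<sigma>" for u
  proof -
    have "u \<noteq> 0" using that by (auto simp: \<sigma>_def dist_norm)
    have "exp1 (L u) = exp (2 * of_real pi * \<i> * z0 + Ln (u / w))"
      unfolding exp1_def L_def by (simp add: algebra_simps)
    also have "\<dots> = w * (u / w)" unfolding exp_add w_def exp1_def using w0 \<open>u \<noteq> 0\<close>
      by (simp add: w_def exp1_def)
    also have "\<dots> = u" using w0 by simp
    finally show ?thesis .
  qed
  have hol2: "(\<lambda>u. exp1 (f (L u))) holomorphic_on ball w \<sigma>"
  proof -
    have "L holomorphic_on ball w \<sigma>" using Lhol \<sigma>(2) holomorphic_on_subset by blast
    moreover have "f holomorphic_on L ` ball w \<sigma>" using r(2) Lin holomorphic_on_subset by blast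
    ultimately have "(f \<circ> L) holomorphic_on ball w \<sigma>" by (rule holomorphic_on_compose)
    thus ?thesis unfolding exp1_def o_def by (intro holomorphic_intros)
  qed
  have geq: "g u = exp1 (f (L u))" if "u \<in> ball w \<sigma>" for u
  proof -
    have "\<not> is_pole f (L u)"
      using not_is_pole_holomorphic[OF open_ball Lin[OF that] r(2)] .
    hence "g (exp1 (L u)) = exp1 (f (L u))" using pr unfolding exp_projection_def by blast
    thus ?thesis using eL[OF that] by simp
  qed
  have "g holomorphic_on ball w \<sigma>"
    using hol2 by (rule holomorphic_transform) (use geq in auto)
  hence "g analytic_on {w}" unfolding analytic_on_def using \<sigma>(1) by blast
  thus ?thesis unfolding w_def by (rule analytic_on_imp_meromorphic_on)
qed


lemma pole_shift:
  assumes nm: "f nicely_meromorphic_on UNIV" and pole: "is_pole f z0"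
    and pr: "exp_projection f g"
  shows "is_pole f (z0 + 1)"
proof (rule ccontr)
  assume np: "\<not> is_pole f (z0 + 1)"
  have "f analytic_on {z0 + 1}" using nicely_meromorphic_on_imp_analytic_at[OF nm _ np] by simp
  then obtain r where r: "r > 0" "f holomorphic_on ball (z0 + 1) r" unfolding analytic_on_def by blast
  have "isCont f (z0 + 1)" using \<open>f analytic_on {z0 + 1}\<close> by (rule analytic_at_imp_isCont)
  hence "isCont (f \<circ> (\<lambda>z. z + 1)) z0"
    by (intro continuous_at_compose) (auto intro: continuous_intros)
  hence "isCont (\<lambda>z. exp1 (f (z + 1))) z0"
    unfolding exp1_def o_def by (intro continuous_intros) (simp add: o_def)
  then obtain \<delta> where \<delta>: "\<delta> > 0"
    "\<And>z. dist z z0 < \<delta> \<Longrightarrow> dist (exp1 (f (z + 1))) (exp1 (f (z0 + 1))) < 1"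
    unfolding continuous_at_eps_delta by (metis zero_less_one)
  define c where "c = exp1 (f (z0 + 1))"
  have claim: "dist (exp1 t) c < 1" for t
  proof -
    obtain z where z: "z \<noteq> z0" "dist z z0 < min \<delta> r" "\<not> is_pole f z" "exp1 (f z) = exp1 t"
      using core[OF nm pole, of "min \<delta> r" t] \<delta>(1) r(1) by auto
    have "z + 1 \<in> ball (z0 + 1) r" using z(2) by (simp add: dist_norm norm_minus_commute)
    hence np1: "\<not> is_pole f (z + 1)" using not_is_pole_holomorphic[OF open_ball _ r(2)] by blast
    have "exp1 t = g (exp1 z)" using pr z(3,4) unfolding exp_projection_def by metis
    also have "\<dots> = g (exp1 (z + 1))" by (simp add: exp1_plus_1)
    also have "\<dots> = exp1 (f (z + 1))" using pr np1 unfolding exp_projection_def by blast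
    finally show ?thesis using \<delta>(2)[of z] z(2) unfolding c_def by simp
  qed
  have "exp1 0 = 1" by (simp add: exp1_def)
  hence "dist 1 c < 1" "dist (-1) c < 1" using claim[of 0] claim[of "1/2"] exp1_half by auto
  moreover have "dist (1::complex) (-1) \<le> dist 1 c + dist (-1) c" by (rule dist_triangle2)
  moreover have "dist (1::complex) (-1) = 2" by (simp add: dist_norm)
  ultimately show False by linarith
qed

lemma pole_shift_nat:
  assumes nm: "f nicely_meromorphic_on UNIV" and pole: "is_pole f z0"
    and pr: "exp_projection f g"
  shows "is_pole f (z0 + of_nat n)"
proof (induction n)
  case 0 thus ?case using pole by simp
next
  case (Suc n)
  from pole_shift[OF nm Suc pr] show ?case by (simp add: algebra_simps)
qed

theorem proposition3p1:
  fixes f g :: "complex \<Rightarrow> complex"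
  assumes "transcendental_meromorphic f"
    and "exp_projection f g"
  shows "ess_sings_finite g - {0} = exp1 ` {z. is_pole f z} \<and>
         (\<not> f holomorphic_on UNIV \<longrightarrow>
            infinite {z. is_pole f z} \<and> ess_sings_finite g - {0} \<noteq> {})"
proof -
  have nm: "f nicely_meromorphic_on UNIV" using assms(1) unfolding transcendental_meromorphic_def by blast
  note pr = assms(2)
  have eq: "ess_sings_finite g - {0} = exp1 ` {z. is_pole f z}"
  proof
    show "ess_sings_finite g - {0} \<subseteq> exp1 ` {z. is_pole f z}"
    proof
      fix w assume w: "w \<in> ess_sings_finite g - {0}"
      define z0 where "z0 = Ln w / (2 * of_real pi * \<i>)"
      have ez: "exp1 z0 = w" using w unfolding z0_def by (simp add: exp1_Ln)
      show "w \<in> exp1 ` {z. is_pole f z}"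
      proof (cases "is_pole f z0")
        case True thus ?thesis using ez by blast
      next
        case False
        from nonpole_mero[OF nm False pr] ez w show ?thesis by (simp add: ess_sings_finite_def)
      qed
    qed
  next
    show "exp1 ` {z. is_pole f z} \<subseteq> ess_sings_finite g - {0}"
      using pole_ess[OF nm _ pr] exp1_nonzero by (auto simp: ess_sings_finite_def)
  qed
  moreover have "infinite {z. is_pole f z} \<and> ess_sings_finite g - {0} \<noteq> {}"
    if nh: "\<not> f holomorphic_on UNIV"
  proof -
    obtain z0 where z0: "is_pole f z0"
    proof (rule ccontr)
      assume "\<not> thesis"
      hence "\<forall>z\<in>UNIV. \<not> is_pole f z" using that by blast
      hence "f analytic_on UNIV" by (rule nicely_meromorphic_without_singularities[OF nm])
      hence "f holomorphic_on UNIV" by (rule analytic_imp_holomorphic)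
      thus False using nh by blast
    qed
    have "range (\<lambda>n::nat. z0 + of_nat n) \<subseteq> {z. is_pole f z}"
      using pole_shift_nat[OF nm z0 pr] by auto
    moreover have "infinite (range (\<lambda>n::nat. z0 + of_nat n))"
      by (rule range_inj_infinite) (auto simp: inj_on_def)
    ultimately have "infinite {z. is_pole f z}" using infinite_super by blast
    moreover have "exp1 z0 \<in> ess_sings_finite g - {0}" using eq z0 by blast
    ultimately show ?thesis by blast
  qed
  ultimately show ?thesis by blast
qed

end
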